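(* Let $P=MN\supset T$ be a maximal parabolic subgroup of $G=\mathrm{GL}_d$, $U\subset N(F)$ and $H\subset M(F)$ open and closed subgroups with $H$ normalizing $U$, and let $\mathfrak{u}$ be the Lie algebra of $U$. Let $X$ be an $H$-orbit in $\mathscr{X}^M$. Then $\dim_k\big(\mathfrak{u}/(\mathfrak{u}\cap\mathrm{Ad}(g)\mathfrak{g}(\mathcal{O}))\big)$ is independent of $g$ for $gK\in X$.
   Context: $k$ algebraically closed, $F=k((\epsilon))$, $\mathcal{O}=k[[\epsilon]]$, $G=\mathrm{GL}_d$, $T$ diagonal torus, $K=G(\mathcal{O})$, $\mathscr{X}=G(F)/K$. $P=MN$ is a Levi decomposition with $M\supset T$; $\mathscr{X}^M=M(F)/M(\mathcal{O})$ is embedded in $\mathscr{X}$ via $mM(\mathcal{O})\mapsto mK$. *)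

theory Defs
  imports "HOL-Analysis.Analysis" "HOL-Computational_Algebra.Formal_Laurent_Series"
          "HOL-Computational_Algebra.Polynomial" "HOL-Library.Extended_Nat"
begin

text \<open>k is an algebraically closed field; F = k((eps)) is the type 'k fls;
  d x d matrices over F are indexed by a finite type 'n, d = CARD('n).\<close>

definition alg_closed_field :: "'k::field itself \<Rightarrow> bool" where
  "alg_closed_field _ \<longleftrightarrow> (\<forall>p :: 'k poly. degree p > 0 \<longrightarrow> (\<exists>x. poly p x = 0))"

text \<open>valuation at least n (the zero series has infinite valuation)\<close>
definition val_ge :: "'k::field fls \<Rightarrow> int \<Rightarrow> bool" where
  "val_ge f n \<longleftrightarrow> f = 0 \<or> fls_subdegree f \<ge> n"

definition intO :: "'k::field fls \<Rightarrow> bool" where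
  "intO f \<longleftrightarrow> val_ge f 0"

type_synonym ('k, 'n) mat = "'k fls ^ 'n ^ 'n"

definition GLF :: "('k::field, 'n::finite) mat set" where
  "GLF = {g. invertible g}"

definition gO :: "('k::field, 'n::finite) mat set" where
  "gO = {X. \<forall>i j. intO (X $ i $ j)}"

definition Kgrp :: "('k::field, 'n::finite) mat set" where
  "Kgrp = {g. invertible g \<and> g \<in> gO \<and> matrix_inv g \<in> gO}"

text \<open>The maximal parabolic P containing T stabilising the coordinate subspace
  spanned by e_i, i in S (S nonempty proper), its Levi factor M containing T
  (block diagonal w.r.t. S and its complement), and its unipotent radical N
  with Lie algebra n.\<close>
definition Parab :: "'n::finite set \<Rightarrow> ('k::field, 'n) mat set" where
  "Parab S = {g \<in> GLF. \<forall>i j. i \<notin> S \<and> j \<in> S \<longrightarrow> g $ i $ j = 0}"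

definition Levi :: "'n::finite set \<Rightarrow> ('k::field, 'n) mat set" where
  "Levi S = {g \<in> GLF. \<forall>i j. (i \<in> S \<longleftrightarrow> j \<notin> S) \<longrightarrow> g $ i $ j = 0}"

definition nLie :: "'n::finite set \<Rightarrow> ('k::field, 'n) mat set" where
  "nLie S = {X. \<forall>i j. \<not> (i \<in> S \<and> j \<notin> S) \<longrightarrow> X $ i $ j = 0}"

definition Nrad :: "'n::finite set \<Rightarrow> ('k::field, 'n) mat set" where
  "Nrad S = {mat 1 + X | X. X \<in> nLie S}"

definition subgroup_of :: "('k::field, 'n::finite) mat set \<Rightarrow> ('k, 'n) mat set \<Rightarrow> bool" where
  "subgroup_of A B \<longleftrightarrow> A \<subseteq> B \<and> mat 1 \<in> A \<and>
     (\<forall>x\<in>A. \<forall>y\<in>A. x ** y \<in> A) \<and> (\<forall>x\<in>A. matrix_inv x \<in> A)"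

text \<open>Openness (in the eps-adic topology) of a subgroup of N(F), resp. M(F):
  it contains a basic neighbourhood of the identity.\<close>
definition open_in_N :: "'n::finite set \<Rightarrow> ('k::field, 'n) mat set \<Rightarrow> bool" where
  "open_in_N S U \<longleftrightarrow> (\<exists>n. \<forall>X\<in>nLie S. (\<forall>i j. val_ge (X $ i $ j) n) \<longrightarrow> mat 1 + X \<in> U)"

definition open_in_M :: "'n::finite set \<Rightarrow> ('k::field, 'n) mat set \<Rightarrow> bool" where
  "open_in_M S H \<longleftrightarrow> (\<exists>n. \<forall>m\<in>Levi S. (\<forall>i j. val_ge ((m - mat 1) $ i $ j) n) \<longrightarrow> m \<in> H)"

definition normalizes :: "('k::field, 'n::finite) mat set \<Rightarrow> ('k, 'n) mat set \<Rightarrow> bool" where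
  "normalizes H U \<longleftrightarrow> (\<forall>h\<in>H. {h ** u ** matrix_inv h | u. u \<in> U} = U)"

text \<open>coset gK, and the H-orbit of mK in X^M (seen inside X = G(F)/K)\<close>
definition coset :: "('k::field, 'n::finite) mat \<Rightarrow> ('k, 'n) mat set" where
  "coset g = {g ** k | k. k \<in> Kgrp}"

definition Horbit :: "('k::field, 'n::finite) mat set \<Rightarrow> ('k, 'n) mat \<Rightarrow> ('k, 'n) mat set set" where
  "Horbit H m = {coset (h ** m) | h. h \<in> H}"

definition ksmult :: "'k::field \<Rightarrow> ('k, 'n::finite) mat \<Rightarrow> ('k, 'n) mat" where
  "ksmult c X = (\<chi> i j. fls_const c * X $ i $ j)"

definition kspan :: "('k::field, 'n::finite) mat set \<Rightarrow> ('k, 'n) mat set" where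
  "kspan A = {(\<Sum>i<n. ksmult (c i) (xs i)) | (n::nat) c xs. \<forall>i<n. xs i \<in> A}"

text \<open>Lie algebra of the (abelian, unipotent) group U inside n(F):
  the k-span of {u - 1 : u in U}.\<close>
definition lie_algebra :: "('k::field, 'n::finite) mat set \<Rightarrow> ('k, 'n) mat set" where
  "lie_algebra U = kspan {u - mat 1 | u. u \<in> U}"

definition Ad :: "('k::field, 'n::finite) mat \<Rightarrow> ('k, 'n) mat \<Rightarrow> ('k, 'n) mat" where
  "Ad g X = g ** X ** matrix_inv g"

text \<open>dim_k (A / (A \<inter> L)) for a k-subspace A: the supremum of the sizes of
  families in A that are k-linearly independent modulo L (possibly infinite).\<close>
definition quot_dim :: "('k::field, 'n::finite) mat set \<Rightarrow> ('k, 'n) mat set \<Rightarrow> enat" where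
  "quot_dim A L = Sup {enat n | n. \<exists>xs. (\<forall>i<n. xs i \<in> A) \<and>
      (\<forall>c. (\<Sum>i<n. ksmult (c i) (xs i)) \<in> L \<longrightarrow> (\<forall>i<n. c i = 0))}"

end

theory Submission
  imports Defs
begin

lemma inv_lr:
  fixes A :: "'a::field^'n^'n"
  assumes "invertible A"
  shows "matrix_inv A ** A = mat 1" "A ** matrix_inv A = mat 1"
proof -
  have "\<exists>A'. A ** A' = mat 1 \<and> A' ** A = mat 1" using assms unfolding invertible_def by blast
  hence "A ** matrix_inv A = mat 1 \<and> matrix_inv A ** A = mat 1"
    unfolding matrix_inv_def by (rule someI_ex)
  thus "matrix_inv A ** A = mat 1" "A ** matrix_inv A = mat 1" by auto
qed

lemma inv_unique:
  fixes A B :: "'a::field^'n^'n"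
  assumes "invertible A" "A ** B = mat 1"
  shows "matrix_inv A = B"
proof -
  have "matrix_inv A = matrix_inv A ** (A ** B)" using assms by simp
  also have "\<dots> = B" using inv_lr[OF assms(1)] by (simp add: matrix_mul_assoc)
  finally show ?thesis .
qed

lemma invertible_inv:
  fixes A :: "'a::field^'n^'n"
  assumes "invertible A"
  shows "invertible (matrix_inv A)" "matrix_inv (matrix_inv A) = A"
proof -
  show "invertible (matrix_inv A)" using inv_lr[OF assms] unfolding invertible_def by blast
  thus "matrix_inv (matrix_inv A) = A" using inv_lr[OF assms] inv_unique by blast
qed

lemma inv_mult:
  fixes A B :: "'a::field^'n^'n"
  assumes "invertible A" "invertible B"
  shows "matrix_inv (A ** B) = matrix_inv B ** matrix_inv A"
proof (rule inv_unique)
  show "invertible (A ** B)" using assms invertible_mult by blast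
  have "A ** B ** (matrix_inv B ** matrix_inv A) = A ** (B ** matrix_inv B) ** matrix_inv A"
    by (simp add: matrix_mul_assoc)
  thus "A ** B ** (matrix_inv B ** matrix_inv A) = mat 1"
    using inv_lr[OF assms(1)] inv_lr[OF assms(2)] by simp
qed

lemma Ad_mult:
  assumes "invertible a" "invertible b"
  shows "Ad (a ** b) X = Ad a (Ad b X)"
  unfolding Ad_def using inv_mult[OF assms] by (simp add: matrix_mul_assoc)

lemma Ad_inv_cancel:
  assumes "invertible h"
  shows "Ad (matrix_inv h) (Ad h X) = X" "Ad h (Ad (matrix_inv h) X) = X"
proof -
  have l: "matrix_inv h ** h = mat 1" and r: "h ** matrix_inv h = mat 1" using inv_lr[OF assms] by auto
  have ii: "matrix_inv (matrix_inv h) = h" using invertible_inv[OF assms] by simp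
  have "Ad (matrix_inv h) (Ad h X) = (matrix_inv h ** h) ** X ** (matrix_inv h ** h)"
    unfolding Ad_def ii by (simp add: matrix_mul_assoc)
  thus "Ad (matrix_inv h) (Ad h X) = X" using l by simp
  have "Ad h (Ad (matrix_inv h) X) = (h ** matrix_inv h) ** X ** (h ** matrix_inv h)"
    unfolding Ad_def ii by (simp add: matrix_mul_assoc)
  thus "Ad h (Ad (matrix_inv h) X) = X" using r by simp
qed

lemma Ad_inj:
  assumes "invertible h" "Ad h X = Ad h Y"
  shows "X = Y"
  by (metis Ad_inv_cancel(1) assms)

lemma mat_mult_nth: "(mat c ** X) $ i $ j = (c::'a::comm_ring_1) * X $ i $ j"
  "(X ** mat c) $ i $ j = X $ i $ j * c"
  by (simp_all add: matrix_matrix_mult_def mat_def if_distrib if_distribR sum.delta sum.delta' cong: if_cong)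
lemma madd_r: "((A::'a::comm_ring_1^'n^'n) + B) ** C = A ** C + B ** C"
  by (simp add: matrix_matrix_mult_def vec_eq_iff distrib_right sum.distrib)
lemma msub_l: "(A::'a::comm_ring_1^'n^'n) ** (B - C) = A ** B - A ** C"
  by (simp add: matrix_matrix_mult_def vec_eq_iff right_diff_distrib sum_subtractf)
lemma msub_r: "((A::'a::comm_ring_1^'n^'n) - B) ** C = A ** C - B ** C"
  by (simp add: matrix_matrix_mult_def vec_eq_iff left_diff_distrib sum_subtractf)
lemma mz: "(A::'a::comm_ring_1^'n^'n) ** 0 = 0" "0 ** A = 0"
  by (simp_all add: matrix_matrix_mult_def vec_eq_iff)

lemma Ad_add:
  fixes X Y :: "('k::field,'n::finite) mat"
  shows "Ad h (X + Y) = Ad h X + Ad h Y"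
  unfolding Ad_def by (simp add: matrix_add_ldistrib madd_r)

lemma Ad_diff:
  fixes X Y :: "('k::field,'n::finite) mat"
  shows "Ad h (X - Y) = Ad h X - Ad h Y"
  unfolding Ad_def by (simp add: msub_l msub_r)

lemma Ad_zero: "Ad h (0::('k::field,'n::finite) mat) = 0"
  unfolding Ad_def by (simp add: mz)

lemma ksmult_eq: "ksmult c X = mat (fls_const c) ** X"
  unfolding ksmult_def by (simp add: vec_eq_iff mat_mult_nth)

lemma mat_comm: "mat (c::'a::comm_ring_1) ** X = X ** mat c"
  by (simp add: vec_eq_iff mat_mult_nth mult.commute)

lemma Ad_ksmult:
  fixes X :: "('k::field,'n::finite) mat"
  shows "Ad h (ksmult c X) = ksmult c (Ad h X)"
  unfolding ksmult_eq Ad_def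
  by (metis mat_comm matrix_mul_assoc)

lemma Ad_sum:
  fixes xs :: "nat \<Rightarrow> ('k::field,'n::finite) mat"
  shows "Ad h (\<Sum>i<n. ksmult (c i) (xs i)) = (\<Sum>i<n. ksmult (c i) (Ad h (xs i)))"
  by (induction n) (simp_all add: Ad_zero Ad_add Ad_ksmult)

lemma Ad_one:
  assumes "invertible h"
  shows "Ad h (mat 1) = mat 1"
  unfolding Ad_def using inv_lr[OF assms] by simp

lemma quot_dim_le:
  fixes A L :: "('k::field,'n::finite) mat set"
  assumes "invertible h" "\<And>x. x \<in> A \<Longrightarrow> Ad h x \<in> A"
  shows "quot_dim A L \<le> quot_dim A (Ad h ` L)"
  unfolding quot_dim_def
proof (rule Sup_subset_mono, safe)
  fix n :: nat and xs :: "nat \<Rightarrow> ('k,'n) mat"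
  assume xsA: "\<forall>i<n. xs i \<in> A"
    and ind: "\<forall>c. (\<Sum>i<n. ksmult (c i) (xs i)) \<in> L \<longrightarrow> (\<forall>i<n. c i = 0)"
  have key: "(\<forall>i<n. (\<lambda>i. Ad h (xs i)) i \<in> A) \<and>
      (\<forall>c. (\<Sum>i<n. ksmult (c i) ((\<lambda>i. Ad h (xs i)) i)) \<in> Ad h ` L \<longrightarrow> (\<forall>i<n. c i = 0))"
  proof safe
    fix i assume "i < n" thus "Ad h (xs i) \<in> A" using xsA assms(2) by blast
  next
    fix c :: "nat \<Rightarrow> 'k" and i :: nat and y assume i: "i < n" and y: "y \<in> L"
      and eq: "(\<Sum>i<n. ksmult (c i) (Ad h (xs i))) = Ad h y"
    hence "Ad h (\<Sum>i<n. ksmult (c i) (xs i)) = Ad h y" using Ad_sum[where h=h and c=c and xs=xs and n=n] by simp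
    hence "(\<Sum>i<n. ksmult (c i) (xs i)) = y" using Ad_inj assms(1) by blast
    thus "c i = 0" using ind y i by blast
  qed
  show "\<exists>m. enat n = enat m \<and> (\<exists>xs. (\<forall>i<m. xs i \<in> A) \<and>
      (\<forall>c. (\<Sum>i<m. ksmult (c i) (xs i)) \<in> Ad h ` L \<longrightarrow> (\<forall>i<m. c i = 0)))"
    apply (rule exI[of _ n], rule conjI[OF refl], rule exI[of _ "\<lambda>i. Ad h (xs i)"])
    using key by simp
qed

lemma intO_iff: "intO f \<longleftrightarrow> (\<forall>k<0. fls_nth f k = 0)"
  unfolding intO_def val_ge_def
  by (metis fls_eq0_below_subdegree fls_subdegree_ge0I order_less_le_trans zero_fls.rep_eq)

lemma intO_add: "intO f \<Longrightarrow> intO g \<Longrightarrow> intO (f + g)"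
  unfolding intO_iff by simp

lemma intO_mult:
  fixes f g :: "'k::field fls"
  shows "intO f \<Longrightarrow> intO g \<Longrightarrow> intO (f * g)"
  unfolding intO_def val_ge_def by (metis fls_mult_subdegree_ge_0 mult_zero_left mult_zero_right)

lemma intO_sum:
  fixes f :: "'a \<Rightarrow> 'k::field fls"
  shows "(\<And>x. x \<in> A \<Longrightarrow> intO (f x)) \<Longrightarrow> intO (sum f A)"
  by (induction A rule: infinite_finite_induct) (auto simp: intO_add, auto simp: intO_def val_ge_def)

lemma gO_mult:
  fixes X Y :: "('k::field,'n::finite) mat"
  shows "X \<in> gO \<Longrightarrow> Y \<in> gO \<Longrightarrow> X ** Y \<in> gO"
  unfolding gO_def matrix_matrix_mult_def
  by (auto intro!: intO_sum intO_mult)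

lemma Kgrp_Ad:
  fixes k :: "('k::field,'n::finite) mat"
  assumes "k \<in> Kgrp"
  shows "Ad k ` gO = gO"
proof -
  have inv: "invertible k" and kg: "k \<in> gO" and ig: "matrix_inv k \<in> gO"
    using assms unfolding Kgrp_def by auto
  have sub: "Ad k X \<in> gO" if "X \<in> gO" for X
    unfolding Ad_def using gO_mult kg ig that by blast
  have sub2: "Ad (matrix_inv k) X \<in> gO" if "X \<in> gO" for X
    unfolding Ad_def using gO_mult kg ig that invertible_inv[OF inv] by metis
  show ?thesis
  proof
    show "Ad k ` gO \<subseteq> gO" using sub by blast
    show "gO \<subseteq> Ad k ` gO"
    proof
      fix X :: "('k,'n) mat" assume "X \<in> gO"
      thus "X \<in> Ad k ` gO" using sub2 Ad_inv_cancel(2)[OF inv, of X] by (metis image_eqI)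
    qed
  qed
qed

lemma one_Kgrp: "(mat 1 :: ('k::field,'n::finite) mat) \<in> Kgrp"
proof -
  have i: "invertible (mat 1 :: ('k,'n) mat)" unfolding invertible_def by (metis matrix_mul_lid)
  have mi: "matrix_inv (mat 1 :: ('k,'n) mat) = mat 1" by (rule inv_unique[OF i]) simp
  have "(mat 1 :: ('k,'n) mat) \<in> gO" unfolding gO_def intO_def val_ge_def mat_def by auto
  thus ?thesis unfolding Kgrp_def using i mi by auto
qed

lemma coset_Ad:
  fixes g a :: "('k::field,'n::finite) mat"
  assumes "invertible a" "coset g = coset a"
  shows "Ad g ` gO = Ad a ` gO"
proof -
  have "g \<in> coset g" unfolding coset_def using one_Kgrp by (metis (mono_tags, lifting) matrix_mul_rid mem_Collect_eq)
  then obtain k where k: "k \<in> Kgrp" "g = a ** k" using assms(2) unfolding coset_def by auto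
  have ik: "invertible k" using k unfolding Kgrp_def by auto
  have "Ad g ` gO = Ad a ` (Ad k ` gO)" using k Ad_mult[OF assms(1) ik] by (simp add: image_image)
  thus ?thesis using Kgrp_Ad[OF k(1)] by simp
qed

theorem mainTheorem16:
  fixes S :: "'n::finite set"
    and U H :: "('k::field, 'n) mat set"
    and m g1 g2 :: "('k, 'n) mat"
  assumes "alg_closed_field TYPE('k)"
    and "S \<noteq> {}" and "S \<noteq> UNIV"
    and "subgroup_of U (Nrad S)" and "open_in_N S U"
    and "subgroup_of H (Levi S)" and "open_in_M S H"
    and "normalizes H U"
    and "m \<in> Levi S"
    and "g1 \<in> GLF" and "coset g1 \<in> Horbit H m"
    and "g2 \<in> GLF" and "coset g2 \<in> Horbit H m"
  shows "quot_dim (lie_algebra U) (Ad g1 ` gO) = quot_dim (lie_algebra U) (Ad g2 ` gO)"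
proof -
  have Hsub: "subgroup_of H (Levi S)" by fact
  have Hinv: "invertible h" if "h \<in> H" for h
    using Hsub that unfolding subgroup_of_def Levi_def GLF_def by auto
  have minv: "invertible m" using assms(9) unfolding Levi_def GLF_def by auto
  have pres: "Ad h x \<in> lie_algebra U" if h: "h \<in> H" and x: "x \<in> lie_algebra U" for h x
  proof -
    have "\<exists>(n::nat) c xs. x = (\<Sum>i<n. ksmult (c i) (xs i)) \<and> (\<forall>i<n. xs i \<in> {u - mat 1 | u. u \<in> U})"
      using x unfolding lie_algebra_def kspan_def by (simp only: mem_Collect_eq)
    then obtain n :: nat and c xs where x_eq: "x = (\<Sum>i<n. ksmult (c i) (xs i))"
      and xs: "\<forall>i<n. xs i \<in> {u - mat 1 | u. u \<in> U}" by blast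
    have "\<forall>i<n. Ad h (xs i) \<in> {u - mat 1 | u. u \<in> U}"
    proof safe
      fix i assume "i < n"
      then obtain u where u: "u \<in> U" "xs i = u - mat 1" using xs by blast
      have "h ** u ** matrix_inv h \<in> U"
        using assms(8) h u(1) unfolding normalizes_def by blast
      moreover have "Ad h (xs i) = h ** u ** matrix_inv h - mat 1"
      proof -
        have "Ad h (xs i) = Ad h u - Ad h (mat 1)" using u(2) Ad_diff by simp
        thus ?thesis using Ad_one[OF Hinv[OF h]] by (simp add: Ad_def)
      qed
      ultimately show "\<exists>u. Ad h (xs i) = u - mat 1 \<and> u \<in> U" by blast
    qed
    moreover have "Ad h x = (\<Sum>i<n. ksmult (c i) (Ad h (xs i)))" using x_eq Ad_sum by simp
    ultimately show ?thesis unfolding lie_algebra_def kspan_def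
      by (intro CollectI exI[of _ n] exI[of _ c] exI[of _ "\<lambda>i. Ad h (xs i)"] conjI) auto
  qed
  obtain h1 where h1: "h1 \<in> H" "coset g1 = coset (h1 ** m)" using assms(11) unfolding Horbit_def by auto
  obtain h2 where h2: "h2 \<in> H" "coset g2 = coset (h2 ** m)" using assms(13) unfolding Horbit_def by auto
  have i1: "invertible (h1 ** m)" using Hinv[OF h1(1)] minv invertible_mult by blast
  have i2: "invertible (h2 ** m)" using Hinv[OF h2(1)] minv invertible_mult by blast
  have L1: "Ad g1 ` gO = Ad (h1 ** m) ` gO" using coset_Ad[OF i1 h1(2)] .
  have L2: "Ad g2 ` gO = Ad (h2 ** m) ` gO" using coset_Ad[OF i2 h2(2)] .
  have trans: "Ad (hb ** m) ` gO = Ad (hb ** matrix_inv ha) ` (Ad (ha ** m) ` gO)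
      \<and> hb ** matrix_inv ha \<in> H"
    if ha: "ha \<in> H" and hb: "hb \<in> H" for ha hb
  proof
    have ia: "invertible ha" and ib: "invertible hb" using Hinv ha hb by auto
    have ii: "invertible (hb ** matrix_inv ha)"
      using ib invertible_inv(1)[OF ia] invertible_mult by blast
    have "(hb ** matrix_inv ha) ** (ha ** m) = hb ** (matrix_inv ha ** ha) ** m"
      by (simp add: matrix_mul_assoc)
    hence "hb ** m = (hb ** matrix_inv ha) ** (ha ** m)"
      using inv_lr(1)[OF ia] by simp
    hence "Ad (hb ** m) X = Ad (hb ** matrix_inv ha) (Ad (ha ** m) X)" for X
      using Ad_mult[OF ii invertible_mult[OF ia minv]] by simp
    thus "Ad (hb ** m) ` gO = Ad (hb ** matrix_inv ha) ` (Ad (ha ** m) ` gO)"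
      by (simp add: image_image)
    show "hb ** matrix_inv ha \<in> H" using Hsub ha hb unfolding subgroup_of_def by blast
  qed
  have le: "quot_dim (lie_algebra U) (Ad (ha ** m) ` gO) \<le> quot_dim (lie_algebra U) (Ad (hb ** m) ` gO)"
    if ha: "ha \<in> H" and hb: "hb \<in> H" for ha hb
  proof -
    have hH: "hb ** matrix_inv ha \<in> H" and eq: "Ad (hb ** m) ` gO = Ad (hb ** matrix_inv ha) ` (Ad (ha ** m) ` gO)"
      using trans[OF ha hb] by auto
    show ?thesis unfolding eq by (rule quot_dim_le[OF Hinv[OF hH]]) (rule pres[OF hH])
  qed
  show ?thesis unfolding L1 L2 using le[OF h1(1) h2(1)] le[OF h2(1) h1(1)] by simp
qed

end
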